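(* (Label weakening.) In DCC, if $\Delta;\Gamma\vdash M:C$, $\Delta;\overline x{:}\overline A,x{:}A\vdash N:B$, and the label $\ell_i$ does not occur in $\Delta$, then $\Delta,\ell_i(\{\overline x{:}\overline A\},x{:}A\mapsto N:B);\Gamma\vdash M:C$.
   Context: DCC: expressions $A,B,L,M,N::=x\mid U_i\mid\Pi x{:}A.B\mid L@M\mid\ell_i\{\overline M\}$, where $\ell_i$ are label names disjoint from variables and $\overline M=M_1,\dots,M_n$ ($n\ge0$). Type contexts $\Gamma::=\cdot\mid\Gamma,x{:}A$; label contexts $\Delta::=\cdot\mid\Delta,\ell_i(\{\overline x{:}\overline A\},x{:}A\mapsto M:B)$ (free-variable telescope $\overline x{:}\overline A$, argument, body, result type). Substitution standard with $\ell\{\overline M\}[N/x]=\ell\{\overline{M[N/x]}\}$. Reduction: $\Delta\vdash\ell\{\overline M\}@N\triangleright L[\overline M/\overline x,N/x]$ when $\ell(\{\overline x{:}\overline A\},x{:}A\mapsto L:B)\in\Delta$. Equivalence $\Delta\vdash M\equiv N$: common reduct, or the $\eta$-rule ($\Delta\vdash L\triangleright^*\ell\{\overline N\}$, $\Delta\vdash M\triangleright^*M'$, $\ell(\{\overline x{:}\overline A\},x{:}A\mapsto N:B)\in\Delta$, $\Delta\vdash N[\overline N/\overline x]\equiv M'@x$ give $\Delta\vdash L\equiv M$) and its symmetric version. Typing $\Delta;\Gamma\vdash M:A$ and formation $\vdash\Delta;\Gamma$ (mutual): variables from a well-formed context, $U_i:U_{i+1}$, $\Pi x{:}A.B:U_{\max(i,j)}$,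 $M@N:B[N/x]$ when $M:\Pi x{:}A.B$ and $N:A$, conversion along $\equiv$ to a type $B:U_i$, and: if $\vdash\Delta;\Gamma$, $\ell(\{\overline x{:}\overline A\},x{:}A\mapsto M:B)\in\Delta$, $|\overline M|=|\overline x|$ and $\Delta;\Gamma\vdash M_k:A_k[M_1/x_1,\dots,M_{k-1}/x_{k-1}]$ for all $k$, then $\Delta;\Gamma\vdash\ell\{\overline M\}:\Pi x{:}A[\overline M/\overline x].B[\overline M/\overline x]$. Formation: $\vdash\cdot;\cdot$; fresh label entries may be added when $\Delta;\overline x{:}\overline A\vdash\Pi x{:}A.B:U_i$ and $\Delta;\overline x{:}\overline A,x{:}A\vdash M:B$; $\vdash\Delta;\Gamma$ and $\Delta;\Gamma\vdash A:U_i$ give $\vdash\Delta;\Gamma,x{:}A$. *)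

theory Defs
  imports Main
begin

text \<open>DCC syntax with de Bruijn indices. Label names are natural numbers.
  Pi A B binds index 0 in B.\<close>

type_synonym lname = nat

datatype tm = Var nat | U nat | Pi tm tm | App tm tm | Lab lname "tm list"

fun ren :: "(nat \<Rightarrow> nat) \<Rightarrow> tm \<Rightarrow> tm" where
  "ren r (Var i) = Var (r i)"
| "ren r (U i) = U i"
| "ren r (Pi A B) = Pi (ren r A) (ren (\<lambda>i. case i of 0 \<Rightarrow> 0 | Suc j \<Rightarrow> Suc (r j)) B)"
| "ren r (App M N) = App (ren r M) (ren r N)"
| "ren r (Lab l Ms) = Lab l (map (ren r) Ms)"

definition lift :: "tm \<Rightarrow> tm" where
  "lift t = ren Suc t"

definition up :: "(nat \<Rightarrow> tm) \<Rightarrow> nat \<Rightarrow> tm" where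
  "up s i = (case i of 0 \<Rightarrow> Var 0 | Suc j \<Rightarrow> lift (s j))"

fun subst :: "(nat \<Rightarrow> tm) \<Rightarrow> tm \<Rightarrow> tm" where
  "subst s (Var i) = s i"
| "subst s (U i) = U i"
| "subst s (Pi A B) = Pi (subst s A) (subst (up s) B)"
| "subst s (App M N) = App (subst s M) (subst s N)"
| "subst s (Lab l Ms) = Lab l (map (subst s) Ms)"

text \<open>Simultaneous substitution of a telescope x_1..x_n := M_1..M_n
  (x_n is index 0); the remaining indices are lowered by n.\<close>
definition inst_sub :: "tm list \<Rightarrow> nat \<Rightarrow> tm" where
  "inst_sub Ms j = (if j < length Ms then rev Ms ! j else Var (j - length Ms))"

definition inst :: "tm list \<Rightarrow> tm \<Rightarrow> tm" where
  "inst Ms t = subst (inst_sub Ms) t"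

text \<open>Label context entry (l, As, A, M, B) = l({xs:As}, x:A |-> M : B).
  As!k lives in context x_1..x_k; A lives in xs; M and B live in xs,x.\<close>
type_synonym lentry = "lname \<times> tm list \<times> tm \<times> tm \<times> tm"
type_synonym lctx = "lentry list"
type_synonym tctx = "tm list"  \<comment> \<open>head = most recent binding\<close>

inductive red1 :: "lctx \<Rightarrow> tm \<Rightarrow> tm \<Rightarrow> bool" for D where
  beta: "(l, As, A, L, B) \<in> set D \<Longrightarrow> red1 D (App (Lab l Ms) N) (inst (Ms @ [N]) L)"
| piL: "red1 D A A' \<Longrightarrow> red1 D (Pi A B) (Pi A' B)"
| piR: "red1 D B B' \<Longrightarrow> red1 D (Pi A B) (Pi A B')"
| appL: "red1 D M M' \<Longrightarrow> red1 D (App M N) (App M' N)"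
| appR: "red1 D N N' \<Longrightarrow> red1 D (App M N) (App M N')"
| lab: "red1 D M M' \<Longrightarrow> red1 D (Lab l (Ms1 @ M # Ms2)) (Lab l (Ms1 @ M' # Ms2))"

abbreviation reds :: "lctx \<Rightarrow> tm \<Rightarrow> tm \<Rightarrow> bool" where
  "reds D \<equiv> (red1 D)\<^sup>*\<^sup>*"

inductive equiv :: "lctx \<Rightarrow> tm \<Rightarrow> tm \<Rightarrow> bool" for D where
  common: "reds D M L \<Longrightarrow> reds D N L \<Longrightarrow> equiv D M N"
| eta1: "reds D L (Lab l Ns) \<Longrightarrow> reds D M M' \<Longrightarrow> (l, As, A, N, B) \<in> set D \<Longrightarrow>
         equiv D (subst (up (inst_sub Ns)) N) (App (lift M') (Var 0)) \<Longrightarrow> equiv D L M"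
| eta2: "reds D L (Lab l Ns) \<Longrightarrow> reds D M M' \<Longrightarrow> (l, As, A, N, B) \<in> set D \<Longrightarrow>
         equiv D (subst (up (inst_sub Ns)) N) (App (lift M') (Var 0)) \<Longrightarrow> equiv D M L"

inductive wf :: "lctx \<Rightarrow> tctx \<Rightarrow> bool"
  and typing :: "lctx \<Rightarrow> tctx \<Rightarrow> tm \<Rightarrow> tm \<Rightarrow> bool" where
  wf_empty: "wf [] []"
| wf_label: "typing D (rev As) (Pi A B) (U i) \<Longrightarrow> typing D (A # rev As) M B \<Longrightarrow>
             l \<notin> fst ` set D \<Longrightarrow> wf (D @ [(l, As, A, M, B)]) []"
| wf_cons: "wf D G \<Longrightarrow> typing D G A (U i) \<Longrightarrow> wf D (A # G)"
| t_var: "wf D G \<Longrightarrow> i < length G \<Longrightarrow> typing D G (Var i) (ren (\<lambda>j. j + Suc i) (G ! i))"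
| t_univ: "wf D G \<Longrightarrow> typing D G (U i) (U (Suc i))"
| t_pi: "typing D G A (U i) \<Longrightarrow> typing D (A # G) B (U j) \<Longrightarrow> typing D G (Pi A B) (U (max i j))"
| t_app: "typing D G M (Pi A B) \<Longrightarrow> typing D G N A \<Longrightarrow> typing D G (App M N) (inst [N] B)"
| t_conv: "typing D G M A \<Longrightarrow> typing D G B (U i) \<Longrightarrow> equiv D A B \<Longrightarrow> typing D G M B"
| t_lab: "wf D G \<Longrightarrow> (l, As, A, M, B) \<in> set D \<Longrightarrow> length Ms = length As \<Longrightarrow>
          (\<forall>k < length Ms. typing D G (Ms ! k) (inst (take k Ms) (As ! k))) \<Longrightarrow>
          typing D G (Lab l Ms) (Pi (inst Ms A) (subst (up (inst_sub Ms)) B))"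

end

theory Submission
  imports Defs
begin

lemma ren_subst_eq: "ren r t = subst (\<lambda>i. Var (r i)) t"
proof (induction t arbitrary: r)
  case (Pi A B)
  have "(\<lambda>i. Var (case i of 0 \<Rightarrow> 0 | Suc j \<Rightarrow> Suc (r j))) = up (\<lambda>i. Var (r i))"
    by (auto simp: up_def lift_def split: nat.split)
  then show ?case using Pi by simp
qed auto

lemma lift_eq: "lift t = subst (\<lambda>i. Var (Suc i)) t"
  by (simp add: lift_def ren_subst_eq)

lemma up_var: "up (\<lambda>i. Var (r i)) = (\<lambda>i. Var (case i of 0 \<Rightarrow> 0 | Suc j \<Rightarrow> Suc (r j)))"
  by (auto simp: up_def lift_def split: nat.split)

lemma subst_ren: "subst s (subst (\<lambda>i. Var (r i)) t) = subst (\<lambda>i. s (r i)) t"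
proof (induction t arbitrary: s r)
  case (Pi A B)
  have "(\<lambda>i. up s (case i of 0 \<Rightarrow> 0 | Suc j \<Rightarrow> Suc (r j))) = up (\<lambda>i. s (r i))"
    by (auto simp: up_def split: nat.split)
  then show ?case using Pi by (simp add: up_var)
qed auto

lemma ren_subst: "subst (\<lambda>i. Var (r i)) (subst s t) = subst (\<lambda>i. subst (\<lambda>i. Var (r i)) (s i)) t"
proof (induction t arbitrary: s r)
  case (Pi A B)
  have "(\<lambda>i. subst (\<lambda>i. Var (case i of 0 \<Rightarrow> 0 | Suc j \<Rightarrow> Suc (r j))) (up s i))
     = up (\<lambda>i. subst (\<lambda>i. Var (r i)) (s i))"
    by (auto simp: up_def lift_eq subst_ren split: nat.split)
  then show ?case using Pi by (simp add: up_var)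
qed auto

lemma subst_subst: "subst s (subst t x) = subst (\<lambda>i. subst s (t i)) x"
proof (induction x arbitrary: s t)
  case (Pi A B)
  have "(\<lambda>i. subst (up s) (up t i)) = up (\<lambda>i. subst s (t i))"
    by (auto simp: up_def lift_eq subst_ren ren_subst split: nat.split)
  then show ?case using Pi by simp
qed auto

lemma subst_id: "subst Var t = t"
proof (induction t)
  case (Pi A B)
  have "up Var = Var" by (rule ext) (simp add: up_def lift_def split: nat.split)
  then show ?case using Pi by simp
next
  case (Lab l Ms)
  then show ?case by (simp add: map_idI)
qed auto

fun closed :: "nat \<Rightarrow> tm \<Rightarrow> bool" where
  "closed n (Var i) = (i < n)"
| "closed n (U i) = True"
| "closed n (Pi A B) = (closed n A \<and> closed (Suc n) B)"
| "closed n (App M N) = (closed n M \<and> closed n N)"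
| "closed n (Lab l Ms) = (\<forall>x\<in>set Ms. closed n x)"

lemma subst_closed_cong: "closed n t \<Longrightarrow> (\<And>i. i < n \<Longrightarrow> f i = g i) \<Longrightarrow> subst f t = subst g t"
proof (induction t arbitrary: n f g)
  case (Pi A B)
  have h: "\<And>i. i < Suc n \<Longrightarrow> up f i = up g i" using Pi.prems by (auto simp: up_def split: nat.split)
  have "subst (up f) B = subst (up g) B"
    by (rule Pi.IH(2)[of "Suc n"]) (use Pi.prems(1) h in auto)
  moreover have "subst f A = subst g A" by (rule Pi.IH(1)[of n]) (use Pi.prems in auto)
  ultimately show ?case by simp
next
  case (Lab l Ms)
  have "\<forall>x\<in>set Ms. subst f x = subst g x"
  proof
    fix x assume x: "x \<in> set Ms"
    show "subst f x = subst g x" by (rule Lab.IH[OF x, of n]) (use Lab.prems x in auto)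
  qed
  then show ?case by simp
next
  case (App M N)
  have "subst f M = subst g M" by (rule App.IH(1)[of n]) (use App.prems in auto)
  moreover have "subst f N = subst g N" by (rule App.IH(2)[of n]) (use App.prems in auto)
  ultimately show ?case by simp
qed auto

lemma closed_mono: "closed n t \<Longrightarrow> n \<le> m \<Longrightarrow> closed m t"
  by (induction t arbitrary: n m) auto


lemma typing_wf: "Defs.wf D G \<Longrightarrow> True" "typing D G M T \<Longrightarrow> Defs.wf D G"
  by (induct rule: wf_typing.inducts) auto

lemma wf_cons_inv: "Defs.wf D (A#G) \<Longrightarrow> Defs.wf D G \<and> (\<exists>i. typing D G A (U i))"
  by (erule wf.cases) auto

lemma wf_nil: "Defs.wf D G \<Longrightarrow> Defs.wf D []"
  by (induction G) (auto dest: wf_cons_inv)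

lemma wf_nth: "Defs.wf D G \<Longrightarrow> i < length G \<Longrightarrow> \<exists>u. typing D (drop (Suc i) G) (G!i) (U u)"
proof (induction G arbitrary: i)
  case (Cons A G)
  then show ?case by (cases i) (auto dest: wf_cons_inv)
qed auto

lemma closed_typing: "Defs.wf D G \<Longrightarrow> \<forall>i<length G. closed (length G - Suc i) (G!i)"
  "typing D G M T \<Longrightarrow> closed (length G) M"
proof (induct rule: wf_typing.inducts)
  case (wf_cons D G A i)
  then show ?case by (auto simp: nth_Cons split: nat.split)
next
  case (t_lab D G l As A M B Ms)
  then show ?case by (auto simp: in_set_conv_nth)
qed auto

fun good :: "lctx \<Rightarrow> tm \<Rightarrow> bool" where
  "good D (Var i) = True"
| "good D (U i) = True"
| "good D (Pi A B) = (good D A \<and> good D B)"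
| "good D (App M N) = (good D M \<and> good D N)"
| "good D (Lab l Ms) = ((\<exists>As A L B. (l, As, A, L, B) \<in> set D \<and> length As = length Ms) \<and> (\<forall>x\<in>set Ms. good D x))"

definition okD :: "lctx \<Rightarrow> bool" where
  "okD D = (distinct (map fst D) \<and> (\<forall>l As A L B. (l, As, A, L, B) \<in> set D \<longrightarrow>
     good D A \<and> good D B \<and> good D L \<and> closed (length As) A \<and> closed (Suc (length As)) B \<and>
     closed (Suc (length As)) L \<and> (\<forall>k<length As. closed k (As!k))))"

lemma good_mono: "good D t \<Longrightarrow> set D \<subseteq> set D' \<Longrightarrow> good D' t"
  by (induction t) fastforce+

lemma good_ren: "good D t \<Longrightarrow> good D (subst (\<lambda>i. Var (r i)) t)"
proof (induction t arbitrary: r)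
  case (Pi A B)
  then show ?case by (simp add: up_var)
qed auto

lemma good_subst: "good D t \<Longrightarrow> (\<And>i. good D (s i)) \<Longrightarrow> good D (subst s t)"
proof (induction t arbitrary: s)
  case (Pi A B)
  have "\<And>i. good D (up s i)" using Pi.prems by (auto simp: up_def lift_eq good_ren split: nat.split)
  then show ?case using Pi by simp
qed auto

lemma good_inst_sub: "\<forall>x\<in>set Ms. good D x \<Longrightarrow> good D (inst_sub Ms i)"
  by (auto simp: inst_sub_def) (metis length_rev nth_mem set_rev)


lemma wf_okD: "Defs.wf D G \<Longrightarrow> okD D \<and> (\<forall>x\<in>set G. good D x)"
  "typing D G M T \<Longrightarrow> okD D \<and> good D M \<and> good D T"
proof (induct rule: wf_typing.inducts)
  case wf_empty
  then show ?case by (simp add: okD_def)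
next
  case (wf_label D As A B i M l)
  have wfA: "Defs.wf D (rev As)" using wf_label(1) by (rule typing_wf)
  have cA: "closed (length As) (Pi A B)" using closed_typing(2)[OF wf_label(1)] by simp
  have cM: "closed (Suc (length As)) M" using closed_typing(2)[OF wf_label(3)] by simp
  have cAs: "\<forall>k<length As. closed k (As!k)"
  proof (intro allI impI)
    fix k assume k: "k < length As"
    have i: "length As - Suc k < length (rev As)" using k by simp
    have "closed (length (rev As) - Suc (length As - Suc k)) (rev As ! (length As - Suc k))"
      using closed_typing(1)[OF wfA] i by blast
    moreover have "length (rev As) - Suc (length As - Suc k) = k" using k by simp
    moreover have "rev As ! (length As - Suc k) = As ! k" using k by (simp add: rev_nth)
    ultimately show "closed k (As!k)" by simp
  qed
  have okD: "okD D" using wf_label(2) by simp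
  have sub: "set D \<subseteq> set (D @ [(l, As, A, M, B)])" by auto
  have "okD (D @ [(l, As, A, M, B)])"
    unfolding okD_def
  proof (rule conjI, goal_cases)
    case 1
    show "distinct (map fst (D @ [(l, As, A, M, B)]))" using okD wf_label(5) by (auto simp: okD_def)
  next
    case 2
    show ?case
    proof (intro allI, rule impI)
    fix l' As' A' L' B' assume e: "(l', As', A', L', B') \<in> set (D @ [(l, As, A, M, B)])"
    show "good (D @ [(l, As, A, M, B)]) A' \<and> good (D @ [(l, As, A, M, B)]) B' \<and>
       good (D @ [(l, As, A, M, B)]) L' \<and> closed (length As') A' \<and> closed (Suc (length As')) B' \<and>
       closed (Suc (length As')) L' \<and> (\<forall>k<length As'. closed k (As' ! k))"
    proof (cases "(l', As', A', L', B') \<in> set D")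
      case True
      then show ?thesis using okD good_mono[OF _ sub] unfolding okD_def by blast
    next
      case False
      then have "(l', As', A', L', B') = (l, As, A, M, B)" using e by auto
      then show ?thesis using wf_label(2,4) cA cM cAs good_mono[OF _ sub] by auto
    qed
    qed
  qed
  then show ?case by simp
next
  case (t_var D G i)
  then show ?case by (auto simp: ren_subst_eq intro!: good_ren)
next
  case (t_app D G M A B N)
  then show ?case by (auto simp: inst_def intro!: good_subst good_inst_sub)
next
  case (t_lab D G l As A M B Ms)
  have gM: "\<forall>x\<in>set Ms. good D x" using t_lab(5) by (auto simp: in_set_conv_nth)
  have gAB: "good D A \<and> good D B" using t_lab(2,3) unfolding okD_def by blast
  have "good D (up (inst_sub Ms) i)" for i
    using gM by (auto simp: up_def lift_eq split: nat.split intro!: good_ren good_inst_sub)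
  then show ?case using t_lab(2,3,4) gM gAB by (auto simp: inst_def intro!: good_subst good_inst_sub)
qed auto

lemma red_mono: "red1 D X Y \<Longrightarrow> set D \<subseteq> set D' \<Longrightarrow> red1 D' X Y"
  by (induction rule: red1.induct) (auto intro: red1.intros)

lemma reds_mono: "reds D X Y \<Longrightarrow> set D \<subseteq> set D' \<Longrightarrow> reds D' X Y"
  by (induction rule: rtranclp_induct) (auto intro: red_mono rtranclp.rtrancl_into_rtrancl)

lemma equiv_mono: "Defs.equiv D X Y \<Longrightarrow> set D \<subseteq> set D' \<Longrightarrow> Defs.equiv D' X Y"
proof (induction rule: Defs.equiv.induct)
  case (common M L N)
  then show ?case by (meson equiv.common reds_mono)
next
  case (eta1 L l Ns M M' As A N B)
  then show ?case by (meson equiv.eta1 reds_mono subsetD)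
next
  case (eta2 L l Ns M M' As A N B)
  then show ?case by (meson equiv.eta2 reds_mono subsetD)
qed


lemma up_0[simp]: "up s 0 = Var 0" by (simp add: up_def)
lemma up_Suc[simp]: "up s (Suc j) = lift (s j)" by (simp add: up_def)

lemma lift_subst: "subst (up s) (lift t) = lift (subst s t)"
  by (simp add: lift_eq subst_subst up_def)

lemma inst_sub_map: "i < length Ms \<Longrightarrow> subst s (inst_sub Ms i) = inst_sub (map (subst s) Ms) i"
  by (simp add: inst_sub_def rev_map)

lemma instM_subst: "closed (length Ms) A \<Longrightarrow> subst s (inst Ms A) = inst (map (subst s) Ms) A"
  unfolding inst_def subst_subst by (rule subst_closed_cong) (auto simp: inst_sub_map)

lemma upinst_subst: "closed (Suc (length Ms)) B \<Longrightarrow>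
   subst (up s) (subst (up (inst_sub Ms)) B) = subst (up (inst_sub (map (subst s) Ms))) B"
  unfolding subst_subst
proof (rule subst_closed_cong)
  fix i assume "i < Suc (length Ms)"
  then show "subst (up s) (up (inst_sub Ms) i) = up (inst_sub (map (subst s) Ms)) i"
    by (cases i) (simp_all add: lift_subst inst_sub_map)
qed

lemma inst1_subst: "subst s (inst [N] B) = inst [subst s N] (subst (up s) B)"
  unfolding inst_def subst_subst
  by (rule arg_cong[where f="\<lambda>f. subst f B"], rule ext)
     (auto simp: up_def inst_sub_def lift_eq subst_subst subst_id split: nat.split)

lemma okD_uniq: "okD D \<Longrightarrow> (l, e1) \<in> set D \<Longrightarrow> (l, e2) \<in> set D \<Longrightarrow> e1 = e2"
  unfolding okD_def by (meson eq_key_imp_eq_value)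

lemma red_subst: "red1 D X Y \<Longrightarrow> okD D \<Longrightarrow> good D X \<Longrightarrow> red1 D (subst s X) (subst s Y)"
proof (induction arbitrary: s rule: red1.induct)
  case (beta l As A L B Ms N)
  then obtain As' A' L' B' where e: "(l, As', A', L', B') \<in> set D" "length As' = length Ms" by auto
  then have "As' = As" using okD_uniq[OF beta(2) e(1) beta(1)] by simp
  then have "closed (Suc (length As)) L" "length As = length Ms" using beta(1,2) e unfolding okD_def by blast+
  then have "subst s (inst (Ms @ [N]) L) = inst (map (subst s) (Ms @ [N])) L"
    by (intro instM_subst) simp
  then show ?case using red1.beta[OF beta(1), of "map (subst s) Ms" "subst s N"] by simp
next
  case (lab M M' l Ms1 Ms2)
  then show ?case using red1.lab by simp
qed (auto intro: red1.intros)

lemma red_good: "red1 D X Y \<Longrightarrow> okD D \<Longrightarrow> good D X \<Longrightarrow> good D Y"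
proof (induction rule: red1.induct)
  case (beta l As A L B Ms N)
  have "good D L" using beta unfolding okD_def by blast
  moreover have "\<forall>x\<in>set (Ms @ [N]). good D x" using beta by auto
  ultimately show ?case unfolding inst_def by (intro good_subst good_inst_sub)
qed auto

lemma reds_good: "reds D X Y \<Longrightarrow> okD D \<Longrightarrow> good D X \<Longrightarrow> good D Y"
  by (induction rule: rtranclp_induct) (auto intro: red_good)

lemma reds_subst: "reds D X Y \<Longrightarrow> okD D \<Longrightarrow> good D X \<Longrightarrow> reds D (subst s X) (subst s Y)"
proof (induction rule: rtranclp_induct)
  case (step y z)
  then have "good D y" using reds_good by blast
  then show ?case using step red_subst by (meson rtranclp.rtrancl_into_rtrancl)
qed auto

lemma equiv_subst: "Defs.equiv D X Y \<Longrightarrow> okD D \<Longrightarrow> good D X \<Longrightarrow> good D Y \<Longrightarrow>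
   Defs.equiv D (subst s X) (subst s Y)"
proof (induction arbitrary: s rule: Defs.equiv.induct)
  case (common M L N)
  then show ?case by (meson equiv.common reds_subst)
next
  case (eta1 L l Ns M M' As A N B)
  have gL: "good D (Lab l Ns)" using eta1 reds_good by blast
  have gM: "good D M'" using eta1 reds_good by blast
  obtain As' A' L' B' where e: "(l, As', A', L', B') \<in> set D" "length As' = length Ns" "\<forall>x\<in>set Ns. good D x"
    using gL by auto
  have "As' = As" using okD_uniq[OF eta1(6) e(1) eta1(3)] by simp
  have "closed (Suc (length As)) N \<and> good D N"
    using eta1(3,6) unfolding okD_def by blast
  then have cN: "closed (Suc (length Ns)) N" and gN: "good D N" using e(2) \<open>As' = As\<close> by auto
  have "good D (up (inst_sub Ns) i)" for i
    using e(3) by (auto simp: up_def lift_eq split: nat.split intro!: good_ren good_inst_sub)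
  then have g1: "good D (subst (up (inst_sub Ns)) N)" using gN by (intro good_subst)
  have g2: "good D (App (lift M') (Var 0))" using gM by (simp add: lift_eq good_ren)
  have "Defs.equiv D (subst (up s) (subst (up (inst_sub Ns)) N)) (subst (up s) (App (lift M') (Var 0)))"
    using eta1.IH eta1(6) g1 g2 by blast
  then have "Defs.equiv D (subst (up (inst_sub (map (subst s) Ns))) N) (App (lift (subst s M')) (Var 0))"
    using upinst_subst[OF cN] by (simp add: lift_subst)
  moreover have "reds D (subst s L) (Lab l (map (subst s) Ns))" using reds_subst[OF eta1(1,6,7)] by simp
  moreover have "reds D (subst s M) (subst s M')" using reds_subst[OF eta1(2,6,8)] .
  ultimately show ?case using eta1(3) by (meson equiv.eta1)
next
  case (eta2 L l Ns M M' As A N B)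
  have gL: "good D (Lab l Ns)" using eta2 reds_good by blast
  have gM: "good D M'" using eta2 reds_good by blast
  obtain As' A' L' B' where e: "(l, As', A', L', B') \<in> set D" "length As' = length Ns" "\<forall>x\<in>set Ns. good D x"
    using gL by auto
  have "As' = As" using okD_uniq[OF eta2(6) e(1) eta2(3)] by simp
  have "closed (Suc (length As)) N \<and> good D N"
    using eta2(3,6) unfolding okD_def by blast
  then have cN: "closed (Suc (length Ns)) N" and gN: "good D N" using e(2) \<open>As' = As\<close> by auto
  have "good D (up (inst_sub Ns) i)" for i
    using e(3) by (auto simp: up_def lift_eq split: nat.split intro!: good_ren good_inst_sub)
  then have g1: "good D (subst (up (inst_sub Ns)) N)" using gN by (intro good_subst)
  have g2: "good D (App (lift M') (Var 0))" using gM by (simp add: lift_eq good_ren)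
  have "Defs.equiv D (subst (up s) (subst (up (inst_sub Ns)) N)) (subst (up s) (App (lift M') (Var 0)))"
    using eta2.IH eta2(6) g1 g2 by blast
  then have "Defs.equiv D (subst (up (inst_sub (map (subst s) Ns))) N) (App (lift (subst s M')) (Var 0))"
    using upinst_subst[OF cN] by (simp add: lift_subst)
  moreover have "reds D (subst s L) (Lab l (map (subst s) Ns))" using reds_subst[OF eta2(1,6,8)] by simp
  moreover have "reds D (subst s M) (subst s M')" using reds_subst[OF eta2(2,6,7)] .
  ultimately show ?case using eta2(3) by (meson equiv.eta2)
qed


lemma lab_weak: "Defs.wf D1 G \<Longrightarrow> Defs.wf D2 [] \<Longrightarrow> set D1 \<subseteq> set D2 \<Longrightarrow> Defs.wf D2 G"
  "typing D1 G M T \<Longrightarrow> Defs.wf D2 [] \<Longrightarrow> set D1 \<subseteq> set D2 \<Longrightarrow> typing D2 G M T"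
proof (induct rule: wf_typing.inducts)
  case (wf_cons D G A i)
  then show ?case by (blast intro: wf_typing.wf_cons)
next
  case (t_var D G i)
  then show ?case by (blast intro: wf_typing.t_var)
next
  case (t_univ D G i)
  then show ?case by (blast intro: wf_typing.t_univ)
next
  case (t_pi D G A i B j)
  then show ?case by (blast intro: wf_typing.t_pi)
next
  case (t_app D G M A B N)
  then show ?case by (blast intro: wf_typing.t_app)
next
  case (t_conv D G M A B i)
  then show ?case by (blast intro: wf_typing.t_conv equiv_mono)
next
  case (t_lab D G l As A M B Ms)
  then show ?case by (intro wf_typing.t_lab) blast+
qed auto

lemma ren_typing: "Defs.wf D G \<Longrightarrow> True"
  "typing D G M T \<Longrightarrow> \<forall>G' r. Defs.wf D G' \<longrightarrow>
   (\<forall>i<length G. r i < length G' \<and> ren (\<lambda>j. j + Suc (r i)) (G'!(r i)) = subst (\<lambda>i. Var (r i)) (ren (\<lambda>j. j + Suc i) (G!i))) \<longrightarrow>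
   typing D G' (subst (\<lambda>i. Var (r i)) M) (subst (\<lambda>i. Var (r i)) T)"
proof (induct rule: wf_typing.inducts)
  case (t_var D G i)
  show ?case
  proof (intro allI impI)
  fix G' r assume P1: "Defs.wf D G'" and P2: "\<forall>i<length G. r i < length G' \<and> ren (\<lambda>j. j + Suc (r i)) (G'!(r i)) = subst (\<lambda>i. Var (r i)) (ren (\<lambda>j. j + Suc i) (G!i))"
  have "typing D G' (Var (r i)) (ren (\<lambda>j. j + Suc (r i)) (G'!(r i)))"
    using t_var P1 P2 by (intro wf_typing.t_var) auto
  then show "typing D G' (subst (\<lambda>i. Var (r i)) (Var i)) (subst (\<lambda>i. Var (r i)) (ren (\<lambda>j. j + Suc i) (G ! i)))"
    using t_var P2 by simp
  qed
next
  case (t_univ D G i)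
  then show ?case by (simp add: wf_typing.t_univ)
next
  case (t_pi D G A i B j)
  show ?case
  proof (intro allI impI)
  fix G' r assume P1: "Defs.wf D G'" and P2: "\<forall>i<length G. r i < length G' \<and> ren (\<lambda>j. j + Suc (r i)) (G'!(r i)) = subst (\<lambda>i. Var (r i)) (ren (\<lambda>j. j + Suc i) (G!i))"
  have tA: "typing D G' (subst (\<lambda>i. Var (r i)) A) (U i)" using t_pi(2) P1 P2 by fastforce
  have wfe: "Defs.wf D (subst (\<lambda>i. Var (r i)) A # G')" using P1 tA by (rule wf_typing.wf_cons)
  define r' where "r' = (\<lambda>i. case i of 0 \<Rightarrow> 0 | Suc j \<Rightarrow> Suc (r j))"
  have hyp: "\<forall>i<length (A # G). r' i < length (subst (\<lambda>i. Var (r i)) A # G') \<and>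
     ren (\<lambda>j. j + Suc (r' i)) ((subst (\<lambda>i. Var (r i)) A # G')!(r' i)) = subst (\<lambda>i. Var (r' i)) (ren (\<lambda>j. j + Suc i) ((A # G)!i))"
  proof (intro allI impI)
    fix i assume i: "i < length (A # G)"
    show "r' i < length (subst (\<lambda>i. Var (r i)) A # G') \<and>
     ren (\<lambda>j. j + Suc (r' i)) ((subst (\<lambda>i. Var (r i)) A # G')!(r' i)) = subst (\<lambda>i. Var (r' i)) (ren (\<lambda>j. j + Suc i) ((A # G)!i))"
    proof (cases i)
      case 0
      then show ?thesis by (simp add: r'_def ren_subst_eq subst_subst)
    next
      case (Suc k)
      then have k: "k < length G" using i by simp
      then have h: "r k < length G'" "ren (\<lambda>j. j + Suc (r k)) (G'!(r k)) = subst (\<lambda>i. Var (r i)) (ren (\<lambda>j. j + Suc k) (G!k))"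
        using P2 by auto
      have "subst (\<lambda>i. Var (Suc i)) (ren (\<lambda>j. j + Suc (r k)) (G'!(r k))) = subst (\<lambda>i. Var (Suc i)) (subst (\<lambda>i. Var (r i)) (ren (\<lambda>j. j + Suc k) (G!k)))"
        using h(2) by simp
      then show ?thesis using h(1) Suc by (simp add: r'_def ren_subst_eq subst_subst)
    qed
  qed
  have tB: "typing D (subst (\<lambda>i. Var (r i)) A # G') (subst (\<lambda>i. Var (r' i)) B) (U j)"
    using t_pi(4) wfe hyp by fastforce
  have "up (\<lambda>i. Var (r i)) = (\<lambda>i. Var (r' i))" by (simp add: up_var r'_def)
  then show "typing D G' (subst (\<lambda>i. Var (r i)) (Pi A B)) (subst (\<lambda>i. Var (r i)) (U (max i j)))"
    using wf_typing.t_pi[OF tA tB] by simp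
  qed
next
  case (t_app D G M A B N)
  show ?case
  proof (intro allI impI)
  fix G' r assume P1: "Defs.wf D G'" and P2: "\<forall>i<length G. r i < length G' \<and> ren (\<lambda>j. j + Suc (r i)) (G'!(r i)) = subst (\<lambda>i. Var (r i)) (ren (\<lambda>j. j + Suc i) (G!i))"
  have "typing D G' (subst (\<lambda>i. Var (r i)) M) (Pi (subst (\<lambda>i. Var (r i)) A) (subst (up (\<lambda>i. Var (r i))) B))"
    using t_app(2) P1 P2 by fastforce
  moreover have "typing D G' (subst (\<lambda>i. Var (r i)) N) (subst (\<lambda>i. Var (r i)) A)"
    using t_app(4) P1 P2 by blast
  ultimately show "typing D G' (subst (\<lambda>i. Var (r i)) (App M N)) (subst (\<lambda>i. Var (r i)) (inst [N] B))"
    by (simp add: inst1_subst wf_typing.t_app)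
  qed
next
  case (t_conv D G M A B i)
  show ?case
  proof (intro allI impI)
  fix G' r assume P1: "Defs.wf D G'" and P2: "\<forall>i<length G. r i < length G' \<and> ren (\<lambda>j. j + Suc (r i)) (G'!(r i)) = subst (\<lambda>i. Var (r i)) (ren (\<lambda>j. j + Suc i) (G!i))"
  have ok: "okD D" "good D A" "good D B" using wf_okD(2)[OF t_conv(1)] wf_okD(2)[OF t_conv(3)] by auto
  have "typing D G' (subst (\<lambda>i. Var (r i)) M) (subst (\<lambda>i. Var (r i)) A)" using t_conv(2) P1 P2 by blast
  moreover have "typing D G' (subst (\<lambda>i. Var (r i)) B) (U i)" using t_conv(4) P1 P2 by fastforce
  moreover have "Defs.equiv D (subst (\<lambda>i. Var (r i)) A) (subst (\<lambda>i. Var (r i)) B)"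
    using equiv_subst[OF t_conv(5) ok] .
  ultimately show "typing D G' (subst (\<lambda>i. Var (r i)) M) (subst (\<lambda>i. Var (r i)) B)" by (rule wf_typing.t_conv)
  qed
next
  case (t_lab D G l As A M B Ms)
  show ?case
  proof (intro allI impI)
  fix G' r assume P1: "Defs.wf D G'" and P2: "\<forall>i<length G. r i < length G' \<and> ren (\<lambda>j. j + Suc (r i)) (G'!(r i)) = subst (\<lambda>i. Var (r i)) (ren (\<lambda>j. j + Suc i) (G!i))"
  let ?s = "\<lambda>i. Var (r i)"
  have okD: "okD D" using wf_okD(1)[OF t_lab(1)] by simp
  then have c: "closed (length As) A" "closed (Suc (length As)) B" "\<forall>k<length As. closed k (As!k)"
    using t_lab(3) unfolding okD_def by blast+
  have "\<forall>k<length (map (subst ?s) Ms). typing D G' (map (subst ?s) Ms ! k) (inst (take k (map (subst ?s) Ms)) (As ! k))"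
  proof (intro allI impI)
    fix k assume k: "k < length (map (subst ?s) Ms)"
    then have "typing D G' (subst ?s (Ms!k)) (subst ?s (inst (take k Ms) (As!k)))" using t_lab(5) P1 P2 by auto
    moreover have "subst ?s (inst (take k Ms) (As!k)) = inst (map (subst ?s) (take k Ms)) (As!k)"
      using c(3) k t_lab(4) by (intro instM_subst) auto
    ultimately show "typing D G' (map (subst ?s) Ms ! k) (inst (take k (map (subst ?s) Ms)) (As ! k))"
      using k by (simp add: take_map)
  qed
  then have "typing D G' (Lab l (map (subst ?s) Ms)) (Pi (inst (map (subst ?s) Ms) A) (subst (up (inst_sub (map (subst ?s) Ms))) B))"
    using t_lab(3,4) P1 by (intro wf_typing.t_lab) auto
  then show "typing D G' (subst ?s (Lab l Ms)) (subst ?s (Pi (inst Ms A) (subst (up (inst_sub Ms)) B)))"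
    using c t_lab(4) by (simp add: instM_subst upinst_subst)
  qed
qed auto

lemma weaken1: "typing D G t T \<Longrightarrow> Defs.wf D (X#G) \<Longrightarrow> typing D (X#G) (lift t) (lift T)"
  using ren_typing(2)[of D G t T] by (simp add: lift_eq ren_subst_eq subst_subst)


lemma subst_typing: "Defs.wf D G \<Longrightarrow> True"
  "typing D G M T \<Longrightarrow> \<forall>G' s. Defs.wf D G' \<longrightarrow>
   (\<forall>i<length G. typing D G' (s i) (subst s (ren (\<lambda>j. j + Suc i) (G!i)))) \<longrightarrow>
   typing D G' (subst s M) (subst s T)"
proof (induct rule: wf_typing.inducts)
  case (t_var D G i)
  then show ?case by simp
next
  case (t_univ D G i)
  then show ?case by (simp add: wf_typing.t_univ)
next
  case (t_pi D G A i B j)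
  show ?case
  proof (intro allI impI)
  fix G' s assume P1: "Defs.wf D G'" and P2: "\<forall>i<length G. typing D G' (s i) (subst s (ren (\<lambda>j. j + Suc i) (G!i)))"
  have tA: "typing D G' (subst s A) (U i)" using t_pi(2) P1 P2 by fastforce
  have wfe: "Defs.wf D (subst s A # G')" using P1 tA by (rule wf_typing.wf_cons)
  have hyp: "\<forall>i<length (A # G). typing D (subst s A # G') (up s i) (subst (up s) (ren (\<lambda>j. j + Suc i) ((A # G)!i)))"
  proof (intro allI impI)
    fix i assume i: "i < length (A # G)"
    show "typing D (subst s A # G') (up s i) (subst (up s) (ren (\<lambda>j. j + Suc i) ((A # G)!i)))"
    proof (cases i)
      case 0
      have "typing D (subst s A # G') (Var 0) (ren (\<lambda>j. j + Suc 0) ((subst s A # G') ! 0))"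
        using wfe by (intro wf_typing.t_var) auto
      then show ?thesis using 0 by (simp add: ren_subst_eq subst_subst lift_eq)
    next
      case (Suc k)
      then have k: "k < length G" using i by simp
      then have "typing D G' (s k) (subst s (ren (\<lambda>j. j + Suc k) (G!k)))" using P2 by auto
      then have "typing D (subst s A # G') (lift (s k)) (lift (subst s (ren (\<lambda>j. j + Suc k) (G!k))))"
        using wfe by (rule weaken1)
      then show ?thesis using Suc by (simp add: ren_subst_eq subst_subst lift_eq)
    qed
  qed
  have tB: "typing D (subst s A # G') (subst (up s) B) (U j)"
    using t_pi(4) wfe hyp by fastforce
  then show "typing D G' (subst s (Pi A B)) (subst s (U (max i j)))"
    using wf_typing.t_pi[OF tA tB] by simp
  qed
next
  case (t_app D G M A B N)
  show ?case
  proof (intro allI impI)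
  fix G' s assume P1: "Defs.wf D G'" and P2: "\<forall>i<length G. typing D G' (s i) (subst s (ren (\<lambda>j. j + Suc i) (G!i)))"
  have "typing D G' (subst s M) (Pi (subst s A) (subst (up s) B))"
    using t_app(2) P1 P2 by fastforce
  moreover have "typing D G' (subst s N) (subst s A)"
    using t_app(4) P1 P2 by blast
  ultimately show "typing D G' (subst s (App M N)) (subst s (inst [N] B))"
    by (simp add: inst1_subst wf_typing.t_app)
  qed
next
  case (t_conv D G M A B i)
  show ?case
  proof (intro allI impI)
  fix G' s assume P1: "Defs.wf D G'" and P2: "\<forall>i<length G. typing D G' (s i) (subst s (ren (\<lambda>j. j + Suc i) (G!i)))"
  have ok: "okD D" "good D A" "good D B" using wf_okD(2)[OF t_conv(1)] wf_okD(2)[OF t_conv(3)] by auto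
  have "typing D G' (subst s M) (subst s A)" using t_conv(2) P1 P2 by blast
  moreover have "typing D G' (subst s B) (U i)" using t_conv(4) P1 P2 by fastforce
  moreover have "Defs.equiv D (subst s A) (subst s B)"
    using equiv_subst[OF t_conv(5) ok] .
  ultimately show "typing D G' (subst s M) (subst s B)" by (rule wf_typing.t_conv)
  qed
next
  case (t_lab D G l As A M B Ms)
  show ?case
  proof (intro allI impI)
  fix G' s assume P1: "Defs.wf D G'" and P2: "\<forall>i<length G. typing D G' (s i) (subst s (ren (\<lambda>j. j + Suc i) (G!i)))"
  let ?s = "s"
  have okD: "okD D" using wf_okD(1)[OF t_lab(1)] by simp
  then have c: "closed (length As) A" "closed (Suc (length As)) B" "\<forall>k<length As. closed k (As!k)"
    using t_lab(3) unfolding okD_def by blast+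
  have "\<forall>k<length (map (subst ?s) Ms). typing D G' (map (subst ?s) Ms ! k) (inst (take k (map (subst ?s) Ms)) (As ! k))"
  proof (intro allI impI)
    fix k assume k: "k < length (map (subst ?s) Ms)"
    then have "typing D G' (subst ?s (Ms!k)) (subst ?s (inst (take k Ms) (As!k)))" using t_lab(5) P1 P2 by auto
    moreover have "subst ?s (inst (take k Ms) (As!k)) = inst (map (subst ?s) (take k Ms)) (As!k)"
      using c(3) k t_lab(4) by (intro instM_subst) auto
    ultimately show "typing D G' (map (subst ?s) Ms ! k) (inst (take k (map (subst ?s) Ms)) (As ! k))"
      using k by (simp add: take_map)
  qed
  then have "typing D G' (Lab l (map (subst ?s) Ms)) (Pi (inst (map (subst ?s) Ms) A) (subst (up (inst_sub (map (subst ?s) Ms))) B))"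
    using t_lab(3,4) P1 by (intro wf_typing.t_lab) auto
  then show "typing D G' (subst ?s (Lab l Ms)) (subst ?s (Pi (inst Ms A) (subst (up (inst_sub Ms)) B)))"
    using c t_lab(4) by (simp add: instM_subst upinst_subst)
  qed
qed auto

lemma pi_inv: "Defs.wf D G \<Longrightarrow> True"
  "typing D G X T \<Longrightarrow> \<forall>A B. X = Pi A B \<longrightarrow> (\<exists>j. typing D (A#G) B (U j))"
  by (induct rule: wf_typing.inducts) auto

lemma entry_typed: "Defs.wf D [] \<Longrightarrow> (l, As, A, L, B) \<in> set D \<Longrightarrow>
  \<exists>D1 u. set D1 \<subseteq> set D \<and> typing D1 (rev As) (Pi A B) (U u)"
proof (induction D rule: rev_induct)
  case Nil
  then show ?case by simp
next
  case (snoc x xs)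
  from snoc.prems(1) obtain As' A' B' i M' l' where
    e: "x = (l', As', A', M', B')" and t: "typing xs (rev As') (Pi A' B') (U i)"
    by (cases rule: wf.cases) auto
  have wxs: "Defs.wf xs []" using wf_nil[OF typing_wf(2)[OF t]] .
  show ?case
  proof (cases "(l, As, A, L, B) \<in> set xs")
    case True
    then show ?thesis using snoc.IH[OF wxs] by auto
  next
    case False
    then have "x = (l, As, A, L, B)" using snoc.prems(2) by auto
    then show ?thesis using e t by (intro exI[of _ xs]) auto
  qed
qed

lemma validity: "Defs.wf D G \<Longrightarrow> True" "typing D G M T \<Longrightarrow> \<exists>u. typing D G T (U u)"
proof (induct rule: wf_typing.inducts)
  case (t_var D G i)
  obtain u where tu: "typing D (drop (Suc i) G) (G!i) (U u)" using wf_nth[OF t_var(1,3)] by blast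
  have "\<forall>G' r. Defs.wf D G' \<longrightarrow>
   (\<forall>j<length (drop (Suc i) G). r j < length G' \<and> ren (\<lambda>x. x + Suc (r j)) (G'!(r j)) = subst (\<lambda>i. Var (r i)) (ren (\<lambda>x. x + Suc j) ((drop (Suc i) G)!j))) \<longrightarrow>
   typing D G' (subst (\<lambda>i. Var (r i)) (G!i)) (subst (\<lambda>i. Var (r i)) (U u))"
    using ren_typing(2)[OF tu] .
  note R = this
  have H: "\<forall>j<length (drop (Suc i) G). (j + Suc i) < length G \<and> ren (\<lambda>x. x + Suc (j + Suc i)) (G!(j + Suc i)) = subst (\<lambda>x. Var (x + Suc i)) (ren (\<lambda>x. x + Suc j) (drop (Suc i) G ! j))"
    using t_var(3) by (auto simp: ren_subst_eq subst_subst ac_simps)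
  have "typing D G (subst (\<lambda>x. Var (x + Suc i)) (G!i)) (subst (\<lambda>x. Var (x + Suc i)) (U u))"
    by (rule R[rule_format, of G "\<lambda>x. x + Suc i", OF t_var(1) H[rule_format]])
  then have "typing D G (subst (\<lambda>x. Var (x + Suc i)) (G!i)) (U u)" by simp
  then show ?case by (auto simp: ren_subst_eq)
next
  case (t_univ D G i)
  then show ?case by (blast intro: wf_typing.t_univ)
next
  case (t_pi D G A i B j)
  then show ?case by (blast intro: wf_typing.t_univ typing_wf)
next
  case (t_app D G M A B N)
  then obtain k where "typing D G (Pi A B) (U k)" by blast
  then obtain j where tB: "typing D (A#G) B (U j)" using pi_inv(2) by blast
  have wG: "Defs.wf D G" using typing_wf(2)[OF t_app(3)] .
  have H: "\<forall>i<length (A # G). typing D G (inst_sub [N] i) (subst (inst_sub [N]) (ren (\<lambda>j. j + Suc i) ((A # G)!i)))"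
  proof (intro allI impI)
    fix i assume i: "i < length (A # G)"
    show "typing D G (inst_sub [N] i) (subst (inst_sub [N]) (ren (\<lambda>j. j + Suc i) ((A # G)!i)))"
    proof (cases i)
      case 0
      have "subst (inst_sub [N]) (ren (\<lambda>j. j + Suc 0) A) = A"
        by (simp add: inst_sub_def ren_subst_eq subst_subst subst_id)
      then show ?thesis using 0 t_app(3) by (simp add: inst_sub_def)
    next
      case (Suc k)
      have "typing D G (Var k) (ren (\<lambda>j. j + Suc k) (G ! k))" using wG i Suc by (intro wf_typing.t_var) auto
      moreover have "subst (inst_sub [N]) (ren (\<lambda>j. j + Suc (Suc k)) (G ! k)) = ren (\<lambda>j. j + Suc k) (G ! k)"
        by (simp add: inst_sub_def ren_subst_eq subst_subst)
      ultimately show ?thesis using Suc by (simp add: inst_sub_def)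
    qed
  qed
  have "typing D G (subst (inst_sub [N]) B) (subst (inst_sub [N]) (U j))"
    by (rule subst_typing(2)[OF tB, rule_format, of G "inst_sub [N]", OF wG H[rule_format]])
  then show ?case by (auto simp: inst_def)
next
  case (t_conv D G M A B i)
  then show ?case by blast
next
  case (t_lab D G l As A M B Ms)
  have w0: "Defs.wf D []" using wf_nil[OF t_lab(1)] .
  obtain D1 u where "set D1 \<subseteq> set D" "typing D1 (rev As) (Pi A B) (U u)"
    using entry_typed[OF w0 t_lab(3)] by blast
  then have tP: "typing D (rev As) (Pi A B) (U u)" using lab_weak(2) w0 by blast
  have okD: "okD D" using wf_okD(1)[OF t_lab(1)] by simp
  then have c: "\<forall>k<length As. closed k (As!k)"
    using t_lab(3) unfolding okD_def by blast
  have hyp: "\<forall>i<length (rev As). typing D G (inst_sub Ms i) (subst (inst_sub Ms) (ren (\<lambda>j. j + Suc i) (rev As ! i)))"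
  proof (intro allI impI)
    fix i assume i: "i < length (rev As)"
    define k where "k = length As - Suc i"
    have k: "k < length As" using i k_def by simp
    have e1: "inst_sub Ms i = Ms ! k" using i t_lab(4) by (simp add: inst_sub_def rev_nth k_def)
    have e2: "rev As ! i = As ! k" using i by (simp add: rev_nth k_def)
    have e3: "subst (inst_sub Ms) (ren (\<lambda>j. j + Suc i) (As ! k)) = inst (take k Ms) (As ! k)"
      unfolding ren_subst_eq subst_subst inst_def
    proof (rule subst_closed_cong[of k])
      show "closed k (As ! k)" using c k by blast
    next
      fix j assume j: "j < k"
      have "j + Suc i < length Ms" using j k_def t_lab(4) i by simp
      moreover have "length Ms - Suc (j + Suc i) = k - Suc j" using k_def t_lab(4) by simp
      ultimately show "subst (inst_sub Ms) (Var (j + Suc i)) = inst_sub (take k Ms) j"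
        using j k t_lab(4) by (simp add: inst_sub_def rev_nth)
    qed
    show "typing D G (inst_sub Ms i) (subst (inst_sub Ms) (ren (\<lambda>j. j + Suc i) (rev As ! i)))"
      using t_lab(5) k t_lab(4) e1 e2 e3 by auto
  qed
  have "typing D G (subst (inst_sub Ms) (Pi A B)) (subst (inst_sub Ms) (U u))"
    using subst_typing(2)[OF tP] t_lab(1) hyp by blast
  then show ?case by (auto simp: inst_def)
qed auto

theorem lemma3p2:
  assumes "typing D G M C"
      and "typing D (A # rev As) N B"
      and "l \<notin> fst ` set D"
  shows "typing (D @ [(l, As, A, N, B)]) G M C"
proof -
  obtain j where tB: "typing D (A # rev As) B (U j)" using validity(2)[OF assms(2)] by blast
  obtain i where tA: "typing D (rev As) A (U i)" using wf_cons_inv[OF typing_wf(2)[OF assms(2)]] by blast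
  have "typing D (rev As) (Pi A B) (U (max i j))" using tA tB by (rule wf_typing.t_pi)
  then have "Defs.wf (D @ [(l, As, A, N, B)]) []" using assms(2,3) by (rule wf_typing.wf_label)
  then show ?thesis by (intro lab_weak(2)[OF assms(1)]) auto
qed

end
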